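(* Every RPBA-recognizable $\omega$-language is PPBA-recognizable.
   Context: A Parikh automaton of dimension $d$ is $\mathcal{A}=(Q,\Sigma,q_0,\Delta,F,C)$ with finite $Q$, $q_0\in Q$, $F\subseteq Q$, finite $\Delta\subseteq Q\times\Sigma\times\mathbb{N}^d\times Q$ and semi-linear $C\subseteq\mathbb{N}^d$ (a finite union of sets $\{b_0+\sum_{j=1}^\ell b_jz_j\mid z_j\in\mathbb{N}\}$, $b_j\in\mathbb{N}^d$). A run on an infinite word $\alpha$ is $r_1r_2\cdots$ with $r_i=(p_{i-1},\alpha_i,\mathbf{v}_i,p_i)\in\Delta$, $p_0=q_0$, and $\rho(r_1\cdots r_i)=\sum_{k\le i}\mathbf{v}_k$. For an RPBA (reachability Parikh–Büchi automaton) the run is accepting if there is $i\ge1$ with $p_i\in F$ and $\rho(r_1\cdots r_i)\in C$, and there are infinitely many $j$ with $p_j\in F$. For a PPBA (prefix Parikh–Büchi automaton) the run is accepting if there are infinitely many $i\ge1$ with $p_i\in F$ and $\rho(r_1\cdots r_i)\in C$. An $\omega$-language is X-recognizable if it equals the set of infinite words with an accepting run of some automaton of type X. *)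

theory Defs
  imports Main
begin

(* Vectors in N^d are represented as lists of naturals of length d. *)
type_synonym vec = "nat list"

definition vadd :: "vec \<Rightarrow> vec \<Rightarrow> vec" where
  "vadd u v = map2 (+) u v"

definition vsmul :: "nat \<Rightarrow> vec \<Rightarrow> vec" where
  "vsmul z v = map ((*) z) v"

definition linear_set :: "nat \<Rightarrow> vec \<Rightarrow> vec list \<Rightarrow> vec set" where
  "linear_set d b0 ps = {v. \<exists>zs::nat list. length zs = length ps \<and>
      v = foldr vadd (map2 vsmul zs ps) b0}"

definition semilinear :: "nat \<Rightarrow> vec set \<Rightarrow> bool" where
  "semilinear d C \<longleftrightarrow> (\<exists>L :: (vec \<times> vec list) set. finite L \<and>
      (\<forall>(b0, ps) \<in> L. length b0 = d \<and> (\<forall>p \<in> set ps. length p = d)) \<and>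
      C = (\<Union>(b0, ps) \<in> L. linear_set d b0 ps))"

(* Parikh automaton (Q, Sigma, q0, Delta, F, C) of dimension d; the alphabet Sigma is
   the (arbitrary) type 'a, states are natural numbers. *)
record 'a parikh_aut =
  states :: "nat set"
  init :: nat
  trans :: "(nat \<times> 'a \<times> vec \<times> nat) set"
  final :: "nat set"
  dim :: nat
  constr :: "vec set"

definition wf_pa :: "'a parikh_aut \<Rightarrow> bool" where
  "wf_pa A \<longleftrightarrow> finite (states A) \<and> init A \<in> states A \<and> final A \<subseteq> states A \<and>
     finite (trans A) \<and>
     (\<forall>(p, a, v, q) \<in> trans A. p \<in> states A \<and> q \<in> states A \<and> length v = dim A) \<and>
     semilinear (dim A) (constr A)"

(* A run on alpha: r :: nat => transition, r i is the (i+1)-th transition r_{i+1},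
   i.e. r i = (p_i, alpha_{i+1}, v_{i+1}, p_{i+1}) with 0-based word alpha :: nat => 'a. *)
definition is_run :: "'a parikh_aut \<Rightarrow> (nat \<Rightarrow> 'a) \<Rightarrow> (nat \<Rightarrow> nat \<times> 'a \<times> vec \<times> nat) \<Rightarrow> bool" where
  "is_run A w r \<longleftrightarrow> (\<forall>i. r i \<in> trans A \<and> fst (snd (r i)) = w i) \<and>
     fst (r 0) = init A \<and>
     (\<forall>i. snd (snd (snd (r i))) = fst (r (Suc i)))"

(* state p_i reached after the first i transitions (i >= 1) *)
definition rstate :: "(nat \<Rightarrow> nat \<times> 'a \<times> vec \<times> nat) \<Rightarrow> nat \<Rightarrow> nat" where
  "rstate r i = snd (snd (snd (r (i - 1))))"

definition rho :: "nat \<Rightarrow> (nat \<Rightarrow> nat \<times> 'a \<times> vec \<times> nat) \<Rightarrow> nat \<Rightarrow> vec" where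
  "rho d r i = foldr vadd (map (\<lambda>k. fst (snd (snd (r k)))) [0..<i]) (replicate d 0)"

definition rpba_accepting :: "'a parikh_aut \<Rightarrow> (nat \<Rightarrow> nat \<times> 'a \<times> vec \<times> nat) \<Rightarrow> bool" where
  "rpba_accepting A r \<longleftrightarrow>
     (\<exists>i\<ge>1. rstate r i \<in> final A \<and> rho (dim A) r i \<in> constr A) \<and>
     (\<exists>\<^sub>\<infinity>j. j \<ge> 1 \<and> rstate r j \<in> final A)"

definition ppba_accepting :: "'a parikh_aut \<Rightarrow> (nat \<Rightarrow> nat \<times> 'a \<times> vec \<times> nat) \<Rightarrow> bool" where
  "ppba_accepting A r \<longleftrightarrow>
     (\<exists>\<^sub>\<infinity>i. i \<ge> 1 \<and> rstate r i \<in> final A \<and> rho (dim A) r i \<in> constr A)"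

definition rpba_lang :: "'a parikh_aut \<Rightarrow> (nat \<Rightarrow> 'a) set" where
  "rpba_lang A = {w. \<exists>r. is_run A w r \<and> rpba_accepting A r}"

definition ppba_lang :: "'a parikh_aut \<Rightarrow> (nat \<Rightarrow> 'a) set" where
  "ppba_lang A = {w. \<exists>r. is_run A w r \<and> ppba_accepting A r}"

definition rpba_recognizable :: "'a set \<Rightarrow> (nat \<Rightarrow> 'a) set \<Rightarrow> bool" where
  "rpba_recognizable \<Sigma> L \<longleftrightarrow> (\<exists>A. wf_pa A \<and>
     (\<forall>(p, a, v, q) \<in> trans A. a \<in> \<Sigma>) \<and> L = rpba_lang A)"

definition ppba_recognizable :: "'a set \<Rightarrow> (nat \<Rightarrow> 'a) set \<Rightarrow> bool" where
  "ppba_recognizable \<Sigma> L \<longleftrightarrow> (\<exists>A. wf_pa A \<and>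
     (\<forall>(p, a, v, q) \<in> trans A. a \<in> \<Sigma>) \<and> L = ppba_lang A)"

end

theory Submission
  imports Defs
begin

lemma vadd_comm: "vadd u v = vadd v u"
  unfolding vadd_def
  by (induction u arbitrary: v) (auto simp: zip_Cons1 split: list.splits)

lemma vadd_assoc: "vadd (vadd a b) c = vadd a (vadd b c)"
  unfolding vadd_def
proof (induction a arbitrary: b c)
  case Nil then show ?case by simp
next
  case (Cons x xs)
  then show ?case
    by (cases b; cases c) auto
qed

lemma vadd_len: "length (vadd u v) = min (length u) (length v)"
  unfolding vadd_def by simp

lemma vadd_lcomm: "vadd a (vadd x y) = vadd x (vadd a y)"
  by (metis vadd_assoc vadd_comm)

lemma foldr_vadd_snoc: "foldr vadd xs (vadd x z) = vadd x (foldr vadd xs z)"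
  by (induction xs) (auto simp: vadd_lcomm)

lemma rho_Suc: "rho d r (Suc i) = vadd (rho d r i) (fst (snd (snd (r i))))"
proof -
  have "rho d r (Suc i) = foldr vadd (map (\<lambda>k. fst (snd (snd (r k)))) [0..<i])
     (vadd (fst (snd (snd (r i)))) (replicate d 0))"
    unfolding rho_def by simp
  also have "\<dots> = vadd (fst (snd (snd (r i)))) (rho d r i)"
    unfolding rho_def by (rule foldr_vadd_snoc)
  finally show ?thesis by (simp add: vadd_comm)
qed

lemma rho_len: "length (rho d r i) \<le> d"
  by (induction i) (auto simp: rho_Suc vadd_len, simp add: rho_def)

lemma vadd_zero: "length u \<le> d \<Longrightarrow> vadd u (replicate d 0) = u"
  unfolding vadd_def
proof (induction u arbitrary: d)
  case Nil then show ?case by simp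
next
  case (Cons x xs)
  then show ?case by (cases d) auto
qed

lemma rho_cong: "(\<And>k. k < i \<Longrightarrow> fst (snd (snd (r k))) = fst (snd (snd (r' k))))
   \<Longrightarrow> rho d r i = rho d r' i"
  unfolding rho_def by (intro arg_cong[where f="\<lambda>xs. foldr vadd xs _"]) auto

lemma rho_zero: "(\<And>k. s \<le> k \<Longrightarrow> k < i \<Longrightarrow> fst (snd (snd (r k))) = replicate d 0)
   \<Longrightarrow> s \<le> i \<Longrightarrow> rho d r i = rho d r s"
proof (induction i)
  case 0 then show ?case by simp
next
  case (Suc i)
  show ?case
  proof (cases "s = Suc i")
    case True then show ?thesis by simp
  next
    case False
    then have "s \<le> i" using Suc by simp
    then show ?thesis using Suc by (simp add: rho_Suc vadd_zero rho_len)
  qed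
qed

definition e0 :: "nat \<times> 'a \<times> vec \<times> nat \<Rightarrow> nat \<times> 'a \<times> vec \<times> nat" where
  "e0 t = (2 * fst t, fst (snd t), fst (snd (snd t)), 2 * snd (snd (snd t)))"
definition esw :: "nat \<times> 'a \<times> vec \<times> nat \<Rightarrow> nat \<times> 'a \<times> vec \<times> nat" where
  "esw t = (2 * fst t, fst (snd t), fst (snd (snd t)), 2 * snd (snd (snd t)) + 1)"
definition e1 :: "nat \<Rightarrow> nat \<times> 'a \<times> vec \<times> nat \<Rightarrow> nat \<times> 'a \<times> vec \<times> nat" where
  "e1 d t = (2 * fst t + 1, fst (snd t), replicate d 0, 2 * snd (snd (snd t)) + 1)"

definition conv :: "'a parikh_aut \<Rightarrow> 'a parikh_aut" where
  "conv A = \<lparr>states = (\<lambda>q. 2*q) ` states A \<union> (\<lambda>q. 2*q+1) ` states A,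
     init = 2 * init A,
     trans = e0 ` trans A \<union> esw ` {t \<in> trans A. snd (snd (snd t)) \<in> final A}
             \<union> e1 (dim A) ` trans A,
     final = (\<lambda>q. 2*q+1) ` final A, dim = dim A, constr = constr A\<rparr>"

lemma conv_simps[simp]: "init (conv A) = 2 * init A" "final (conv A) = (\<lambda>q. 2*q+1) ` final A"
  "dim (conv A) = dim A" "constr (conv A) = constr A"
  "trans (conv A) = e0 ` trans A \<union> esw ` {t \<in> trans A. snd (snd (snd t)) \<in> final A}
             \<union> e1 (dim A) ` trans A"
  "states (conv A) = (\<lambda>q. 2*q) ` states A \<union> (\<lambda>q. 2*q+1) ` states A"
  by (simp_all add: conv_def)

lemma conv_wf: "wf_pa A \<Longrightarrow> wf_pa (conv A)"
  unfolding wf_pa_def by (auto simp: e0_def esw_def e1_def)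

lemma conv_alpha: "\<forall>(p, a, v, q) \<in> trans A. a \<in> \<Sigma> \<Longrightarrow>
   \<forall>(p, a, v, q) \<in> trans (conv A). a \<in> \<Sigma>"
  by (auto simp: e0_def esw_def e1_def)


lemma rpba_sub: assumes "is_run A w r" "rpba_accepting A r"
  shows "w \<in> ppba_lang (conv A)"
proof -
  define d where "d = dim A"
  obtain i where i1: "i \<ge> 1" and iF: "rstate r i \<in> final A" and iC: "rho d r i \<in> constr A"
    using assms(2) unfolding rpba_accepting_def d_def by blast
  have inf: "infinite {j. j \<ge> 1 \<and> rstate r j \<in> final A}"
    using assms(2) unfolding rpba_accepting_def frequently_cofinite by simp
  define r' where "r' k = (if k < i - 1 then e0 (r k) else if k = i - 1 then esw (r k)
      else e1 d (r k))" for k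
  have run: "\<forall>i. r i \<in> trans A \<and> fst (snd (r i)) = w i" "fst (r 0) = init A"
     "\<forall>i. snd (snd (snd (r i))) = fst (r (Suc i))"
    using assms(1) unfolding is_run_def by auto
  have tgtF: "snd (snd (snd (r (i - 1)))) \<in> final A" using iF unfolding rstate_def .
  have "is_run (conv A) w r'"
    unfolding is_run_def
  proof (intro conjI allI)
    fix k
    show "r' k \<in> trans (conv A)" using run(1) tgtF
      by (auto simp: r'_def d_def)
    show "fst (snd (r' k)) = w k" using run(1) by (simp add: r'_def e0_def esw_def e1_def)
    show "snd (snd (snd (r' k))) = fst (r' (Suc k))" using run(3)
      by (auto simp: r'_def e0_def esw_def e1_def)
  next
    show "fst (r' 0) = init (conv A)" using run(2) i1
      by (auto simp: r'_def e0_def esw_def e1_def)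
  qed
  moreover have "ppba_accepting (conv A) r'"
  proof -
    have rhoeq: "rho d r' j = rho d r i" if "j \<ge> i" for j
    proof -
      have "rho d r' j = rho d r' i"
        using i1 by (intro rho_zero) (auto simp: r'_def e1_def that)
      also have "\<dots> = rho d r i"
        by (rule rho_cong) (auto simp: r'_def e0_def esw_def)
      finally show ?thesis .
    qed
    have "{j. j \<ge> 1 \<and> rstate r j \<in> final A} - {..<i} \<subseteq>
      {j. j \<ge> 1 \<and> rstate r' j \<in> final (conv A) \<and> rho (dim (conv A)) r' j \<in> constr (conv A)}"
    proof
      fix j assume j: "j \<in> {j. j \<ge> 1 \<and> rstate r j \<in> final A} - {..<i}"
      then have "j \<ge> i" "j \<ge> 1" "rstate r j \<in> final A" by auto
      moreover have "rstate r' j = 2 * rstate r j + 1"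
        using \<open>j \<ge> i\<close> i1 by (auto simp: rstate_def r'_def esw_def e1_def)
      ultimately show "j \<in> {j. j \<ge> 1 \<and> rstate r' j \<in> final (conv A) \<and>
          rho (dim (conv A)) r' j \<in> constr (conv A)}"
        using rhoeq iC by (auto simp: d_def)
    qed
    moreover have "infinite ({j. j \<ge> 1 \<and> rstate r j \<in> final A} - {..<i})"
      using inf by simp
    ultimately show ?thesis unfolding ppba_accepting_def frequently_cofinite
      using finite_subset by blast
  qed
  ultimately show ?thesis unfolding ppba_lang_def by blast
qed


definition Rel :: "'a parikh_aut \<Rightarrow> nat \<times> 'a \<times> vec \<times> nat \<Rightarrow> nat \<times> 'a \<times> vec \<times> nat \<Rightarrow> bool" where
  "Rel A t0 t \<longleftrightarrow> t0 \<in> trans A \<and> (t = e0 t0 \<or> (snd (snd (snd t0)) \<in> final A \<and> t = esw t0)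
     \<or> t = e1 (dim A) t0)"

lemma Rel_ex: "t \<in> trans (conv A) \<Longrightarrow> \<exists>t0. Rel A t0 t"
  unfolding Rel_def conv_simps by blast

lemma Rel_props: assumes "Rel A t0 t"
  shows "t0 \<in> trans A" "fst t0 = fst t div 2" "fst (snd t0) = fst (snd t)"
    "snd (snd (snd t0)) = snd (snd (snd t)) div 2"
    "even (fst t) \<Longrightarrow> fst (snd (snd t)) = fst (snd (snd t0))"
    "odd (fst t) \<Longrightarrow> odd (snd (snd (snd t))) \<and> fst (snd (snd t)) = replicate (dim A) 0"
    "even (fst t) \<Longrightarrow> odd (snd (snd (snd t))) \<Longrightarrow> snd (snd (snd t0)) \<in> final A"
  using assms unfolding Rel_def by (auto simp: e0_def esw_def e1_def)

lemma ppba_sub: assumes "is_run (conv A) w r'" "ppba_accepting (conv A) r'"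
  shows "w \<in> rpba_lang A"
proof -
  define d where "d = dim A"
  define r where "r k = (SOME t0. Rel A t0 (r' k))" for k
  have run: "\<forall>i. r' i \<in> trans (conv A) \<and> fst (snd (r' i)) = w i" "fst (r' 0) = 2 * init A"
     "\<forall>i. snd (snd (snd (r' i))) = fst (r' (Suc i))"
    using assms(1) unfolding is_run_def by auto
  have R: "Rel A (r k) (r' k)" for k
    unfolding r_def using Rel_ex run(1) by (metis someI_ex)
  note P = Rel_props[OF R]
  have isrun: "is_run A w r"
    unfolding is_run_def using P run by auto
  have pers: "odd (fst (r' k))" if "odd (fst (r' s))" "s \<le> k" for s k
    using that
  proof (induction k)
    case 0 then show ?case by simp
  next
    case (Suc k)
    show ?case
    proof (cases "s = Suc k")
      case True then show ?thesis using Suc by simp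
    next
      case False
      then have "odd (fst (r' k))" using Suc by simp
      then show ?thesis using P(6)[of k] run(3) by metis
    qed
  qed
  have inf: "infinite {i. i \<ge> 1 \<and> rstate r' i \<in> final (conv A) \<and> rho d r' i \<in> constr A}"
    using assms(2) unfolding ppba_accepting_def frequently_cofinite d_def by simp
  then obtain i where i: "i \<ge> 1" "rstate r' i \<in> final (conv A)" "rho d r' i \<in> constr A"
    using not_finite_existsD by blast
  have rs: "rstate r' j = fst (r' j)" if "j \<ge> 1" for j
    using run(3)[rule_format, of "j - 1"] that unfolding rstate_def by simp
  have oi: "odd (fst (r' i))" using i rs[of i] by auto
  define s where "s = (LEAST k. odd (fst (r' k)))"
  have os: "odd (fst (r' s))" using oi unfolding s_def by (rule LeastI)
  have si: "s \<le> i" using oi unfolding s_def by (rule Least_le)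
  have "s \<noteq> 0" using os run(2) by (metis dvd_triv_left)
  then obtain m where m: "s = Suc m" by (cases s) auto
  have ev: "even (fst (r' k))" if "k < s" for k
    using that not_less_Least unfolding s_def by blast
  have mF: "rstate r s \<in> final A"
    using P(7)[of m] ev[of m] os run(3) m unfolding rstate_def by simp
  have "rho d r s = rho d r' s"
    using ev P(5) by (intro rho_cong) auto
  also have "\<dots> = rho d r' i"
    using si os pers P(6) by (intro rho_zero[symmetric]) (auto simp: d_def)
  finally have sC: "rho d r s \<in> constr A" using i by simp
  have "{i. i \<ge> 1 \<and> rstate r' i \<in> final (conv A) \<and> rho d r' i \<in> constr A}
     \<subseteq> {j. j \<ge> 1 \<and> rstate r j \<in> final A}"
    using P(4) by (auto simp: rstate_def)
  then have "infinite {j. j \<ge> 1 \<and> rstate r j \<in> final A}"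
    using inf finite_subset by blast
  then have "rpba_accepting A r"
    unfolding rpba_accepting_def frequently_cofinite d_def using sC mF m
    by (auto simp: d_def)
  then show ?thesis using isrun unfolding rpba_lang_def by blast
qed

theorem corollary1:
  fixes \<Sigma> :: "'a set" and L :: "(nat \<Rightarrow> 'a) set"
  assumes "finite \<Sigma>"
    and "rpba_recognizable \<Sigma> L"
  shows "ppba_recognizable \<Sigma> L"
proof -
  obtain A where A: "wf_pa A" "\<forall>(p, a, v, q) \<in> trans A. a \<in> \<Sigma>" "L = rpba_lang A"
    using assms(2) unfolding rpba_recognizable_def by blast
  have "rpba_lang A = ppba_lang (conv A)"
  proof
    show "rpba_lang A \<subseteq> ppba_lang (conv A)"
      using rpba_sub unfolding rpba_lang_def by blast
    show "ppba_lang (conv A) \<subseteq> rpba_lang A"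
      using ppba_sub unfolding ppba_lang_def by blast
  qed
  then show ?thesis unfolding ppba_recognizable_def
    using conv_wf[OF A(1)] conv_alpha[OF A(2)] A(3) by blast
qed

end
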